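(* Let $p\ge 0$ be an integer. For all complex $y$ and all complex $x\ne 1$, $$\sum_{n=0}^{\infty}\binom{n}{p} R_n(y)\,x^n=\frac{x^p e^{y}}{(1-x)^{p+1}}\left\{1-e^{-(1-x)y}\sum_{j=0}^{p}\frac{(1-x)^j y^j}{j!}\right\},$$ and for $x=1$, $$\sum_{n=0}^{\infty}\binom{n}{p} R_n(y)=\frac{e^{y}y^{p+1}}{(p+1)!}.$$ (Convention: $0^0=1$.)
   Context: For an integer $n\ge 0$ and complex $y$, $R_n(y)=e^y-1-\frac{y}{1!}-\frac{y^2}{2!}-\dots-\frac{y^n}{n!}=e^y-\sum_{k=0}^n\frac{y^k}{k!}$. $\binom{n}{p}=0$ for $n<p$. *)

theory Defs
  imports Complex_Main
begin

definition R :: "nat \<Rightarrow> complex \<Rightarrow> complex" where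
  "R n y = exp y - (\<Sum>k\<le>n. y ^ k / of_nat (fact k))"

end

theory Submission imports Defs "HOL-Analysis.Infinite_Sum" begin

definition Bq :: "complex \<Rightarrow> nat \<Rightarrow> nat \<Rightarrow> complex" where
  "Bq x p k = (\<Sum>j\<le>p. of_nat (k choose j) * x^(k-j) * (1-x)^j)"

lemma Bq_diff: "Bq x p k - Bq x p (Suc k) = of_nat (k choose p) * x^(k-p) * (1-x)^(Suc p)"
proof (induction p)
  case 0
  then show ?case by (simp add: Bq_def algebra_simps)
next
  case (Suc p)
  have e1: "Bq x (Suc p) k = Bq x p k + of_nat (k choose Suc p) * x^(k - Suc p) * (1-x)^(Suc p)"
    by (simp add: Bq_def)
  have e2: "Bq x (Suc p) (Suc k) = Bq x p (Suc k) + (of_nat (k choose p) + of_nat (k choose Suc p)) * x^(k - p) * (1-x)^(Suc p)"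
    by (simp add: Bq_def)
  have c: "Bq x (Suc p) k - Bq x (Suc p) (Suc k) = (Bq x p k - Bq x p (Suc k)) + of_nat (k choose Suc p) * x^(k - Suc p) * (1-x)^(Suc p) - (of_nat (k choose p) + of_nat (k choose Suc p)) * x^(k - p) * (1-x)^(Suc p)"
    unfolding e1 e2 by (simp add: algebra_simps)
  show ?case
  proof (cases "k \<le> p")
    case True
    then have z: "k choose Suc p = 0" and z1: "k - p = 0" and z2: "k - Suc p = 0" by simp_all
    show ?thesis unfolding c Suc.IH z z1 z2 by simp
  next
    case False
    then have kp: "k - p = Suc (k - Suc p)" by simp
    show ?thesis unfolding c Suc.IH kp by (simp add: algebra_simps)
  qed
qed

lemma poly_id: "(1-x)^(Suc p) * (\<Sum>n<k. of_nat (n choose p) * x^n) = x^p * (1 - Bq x p k)"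
proof (induction k)
  case 0
  have "Bq x p 0 = 1" unfolding Bq_def by (simp add: sum.atMost_shift)
  then show ?case by simp
next
  case (Suc k)
  have aux: "x^p * (of_nat (k choose p) * x^(k-p)) = of_nat (k choose p) * x^k"
  proof (cases "p \<le> k")
    case True
    then show ?thesis by (simp add: power_add[symmetric])
  qed simp
  have B: "Bq x p (Suc k) = Bq x p k - of_nat (k choose p) * x^(k-p) * (1-x)^(Suc p)"
    using Bq_diff[of x p k] by (simp add: algebra_simps)
  have "x^p * (1 - Bq x p (Suc k)) = x^p * (1 - Bq x p k) + (x^p * (of_nat (k choose p) * x^(k-p))) * (1-x)^(Suc p)"
    unfolding B by (simp add: algebra_simps)
  also have "\<dots> = (1-x)^(Suc p) * (\<Sum>n<Suc k. of_nat (n choose p) * x^n)"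
    unfolding aux Suc.IH[symmetric] by (simp add: algebra_simps)
  finally show ?case by simp
qed

lemma hockey: "(\<Sum>n<k. n choose p) = k choose Suc p"
  by (induction k) auto

lemma exp_sums_c: "(\<lambda>k. (z::complex)^k / fact k) sums exp z"
  using exp_converges[of z] by (simp add: scaleR_conv_of_real divide_inverse mult.commute)

lemma exp_sums_r: "(\<lambda>k. (z::real)^k / fact k) sums exp z"
  using exp_converges[of z] by (simp add: divide_inverse mult.commute)

lemma L: "(\<lambda>k. (y::complex)^k / fact k * (of_nat (k choose j) * x^(k-j))) sums (y^j / fact j * exp (x*y))"
proof -
  have "(\<lambda>i. y^j / fact j * ((x*y)^i / fact i)) sums (y^j / fact j * exp (x*y))"
    by (rule sums_mult[OF exp_sums_c])
  moreover have "y^(i+j) / fact (i+j) * (of_nat ((i+j) choose j) * x^((i+j)-j)) = y^j / fact j * ((x*y)^i / fact i)" for i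
  proof -
    have "of_nat ((i+j) choose j) = (fact (i+j) / (fact j * fact i) :: complex)"
      using binomial_fact[of j "i+j"] by simp
    then show ?thesis by (simp add: power_add power_mult_distrib field_simps)
  qed
  ultimately have "(\<lambda>i. y^(i+j) / fact (i+j) * (of_nat ((i+j) choose j) * x^((i+j)-j))) sums (y^j / fact j * exp (x*y))"
    by simp
  then show ?thesis
    by (subst sums_zero_iff_shift[symmetric, of j]) auto
qed

lemma bound_le:
  fixes x y :: complex
  assumes "n < k"
  shows "norm (of_nat (n choose p) * x^n * (y^k / fact k))
     \<le> (1/2)^n * ((4 * max 1 (norm x) * norm y)^k / fact k)"
proof -
  define M where "M = max 1 (norm x)"
  have M1: "M \<ge> 1" by (simp add: M_def)
  have Mk: "0 \<le> M ^ k" using M1 by simp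
  have nx: "norm x \<le> M" by (simp add: M_def)
  have "real (n choose p) \<le> real (2^n)" using binomial_le_pow2[of n p] by (simp only: of_nat_le_iff)
  then have c: "real (n choose p) \<le> 2^n" by simp
  have xn: "norm x ^ n \<le> M ^ k"
  proof -
    have "norm x ^ n \<le> M ^ n" by (rule power_mono[OF nx]) simp
    also have "\<dots> \<le> M ^ k" using M1 assms by (intro power_increasing) auto
    finally show ?thesis .
  qed
  have t: "(2::real)^n \<le> (1/2)^n * 4^k"
  proof -
    have "(2::real)^n * 2^n \<le> 4^k"
    proof -
      have "(2::real)^n * 2^n = 4^n" by (simp add: power_mult_distrib[symmetric])
      also have "\<dots> \<le> 4^k" using assms by (intro power_increasing) auto
      finally show ?thesis .
    qed
    then show ?thesis by (simp add: field_simps power_divide)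
  qed
  have "norm (of_nat (n choose p) * x^n * (y^k / fact k)) = real (n choose p) * norm x ^ n * (norm y ^ k / fact k)"
    by (simp add: norm_mult norm_power norm_divide)
  also have "\<dots> \<le> 2^n * M^k * (norm y ^ k / fact k)"
    by (intro mult_right_mono mult_mono c xn Mk) auto
  also have "\<dots> \<le> ((1/2)^n * 4^k) * M^k * (norm y ^ k / fact k)"
    using Mk by (intro mult_right_mono t) auto
  also have "\<dots> = (1/2)^n * ((4 * M * norm y)^k / fact k)"
    by (simp add: power_mult_distrib)
  finally show ?thesis by (simp add: M_def)
qed

lemma fubini:
  fixes x y :: complex
  assumes S: "(\<lambda>k. y^k / fact k * (\<Sum>n<k. of_nat (n choose p) * x^n)) sums S"
  shows "(\<lambda>n. of_nat (n choose p) * R n y * x^n) sums S"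
proof -
  define F where "F n k = (if n < k then of_nat (n choose p) * x^n * (y^k / fact k) else (0::complex))" for n k
  define z where "z = 4 * max 1 (norm x) * norm y"
  define g where "g = (\<lambda>(n::nat,k::nat). (1/2::real)^n * (z^k / fact k))"
  have z0: "z \<ge> 0" by (simp add: z_def)
  have gs: "g summable_on (UNIV \<times> UNIV)"
  proof (rule summable_on_SigmaI)
    fix n :: nat
    have "(\<lambda>k. (1/2::real)^n * (z^k/fact k)) sums ((1/2)^n*exp z)" by (rule sums_mult[OF exp_sums_r])
    then have "((\<lambda>k. (1/2::real)^n * (z^k/fact k)) has_sum ((1/2)^n*exp z)) UNIV"
      by (rule sums_nonneg_imp_has_sum) (use z0 in simp)
    then show "((\<lambda>k. g (n, k)) has_sum ((1/2)^n * exp z)) UNIV"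
      unfolding g_def by simp
  next
    have "((\<lambda>n. (1/2::real)^n) has_sum 2) UNIV"
      by (rule sums_nonneg_imp_has_sum) (use geometric_sums[of "1/2::real"] in auto)
    then have "((\<lambda>n. (1/2::real)^n * exp z) has_sum (2 * exp z)) UNIV"
      by (rule has_sum_cmult_left)
    then show "(\<lambda>n. (1/2::real)^n * exp z) summable_on UNIV"
      by (auto simp: summable_on_def)
  next
    fix n k show "0 \<le> g (n, k)" unfolding g_def using z0 by simp
  qed
  have Fs: "(\<lambda>(n,k). F n k) summable_on (UNIV \<times> UNIV)"
  proof -
  show ?thesis
  proof (rule abs_summable_summable, rule abs_summable_on_comparison_test'[OF gs])
    fix nk :: "nat \<times> nat"
    obtain n k where nk: "nk = (n,k)" by fastforce
    show "norm ((\<lambda>(n,k). F n k) nk) \<le> g nk"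
      unfolding nk F_def g_def z_def using bound_le[of n k p x y] by auto
  qed
  qed
  define T where "T = infsum (\<lambda>(n,k). F n k) (UNIV \<times> UNIV)"
  have FT: "((\<lambda>(n,k). F n k) has_sum T) (UNIV \<times> UNIV)"
    unfolding T_def using Fs by (rule has_sum_infsum)
  have row: "F n sums (of_nat (n choose p) * R n y * x^n)" for n
  proof -
    have "(\<lambda>k. y^k / fact k - (if k \<in> {..n} then y^k / fact k else 0)) sums (exp y - (\<Sum>k\<in>{..n}. y^k / fact k))"
      by (intro sums_diff exp_sums_c sums_If_finite_set) simp
    then have "(\<lambda>k. of_nat (n choose p) * x^n * (y^k / fact k - (if k \<in> {..n} then y^k / fact k else 0))) sums (of_nat (n choose p) * x^n * (exp y - (\<Sum>k\<in>{..n}. y^k / fact k)))"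
      by (rule sums_mult)
    moreover have "(\<lambda>k. of_nat (n choose p) * x^n * (y^k / fact k - (if k \<in> {..n} then y^k / fact k else 0))) = F n"
      by (auto simp: F_def fun_eq_iff)
    ultimately show ?thesis by (simp add: R_def mult_ac)
  qed
  have rowT: "((\<lambda>n. of_nat (n choose p) * R n y * x^n) has_sum T) UNIV"
  proof (rule has_sum_Sigma'[OF FT[unfolded case_prod_unfold]])
    fix n :: nat
    have "F n summable_on UNIV" using summable_on_SigmaD1[OF Fs] by auto
    then have h: "(F n has_sum infsum (F n) UNIV) UNIV" by (rule has_sum_infsum)
    then have "infsum (F n) UNIV = of_nat (n choose p) * R n y * x^n"
      using row[of n] has_sum_imp_sums sums_unique2 by blast
    then show "((\<lambda>k. F (fst (n, k)) (snd (n, k))) has_sum (of_nat (n choose p) * R n y * x^n)) UNIV"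
      using h by simp
  qed
  have col: "(\<lambda>n. F n k) sums (y^k / fact k * (\<Sum>n<k. of_nat (n choose p) * x^n))" for k
  proof -
    have "(\<lambda>n. if n \<in> {..<k} then of_nat (n choose p) * x^n * (y^k / fact k) else 0) sums (\<Sum>n\<in>{..<k}. of_nat (n choose p) * x^n * (y^k / fact k))"
      by (rule sums_If_finite_set) simp
    then show ?thesis by (simp add: F_def sum_distrib_left sum_distrib_right mult_ac)
  qed
  have FT': "((\<lambda>(k,n). F n k) has_sum T) (UNIV \<times> UNIV)"
    using FT by (subst (asm) has_sum_swap) simp
  have Fs': "(\<lambda>(k,n). F n k) summable_on (UNIV \<times> UNIV)"
    using FT' by (auto simp: summable_on_def)
  have colT: "((\<lambda>k. y^k / fact k * (\<Sum>n<k. of_nat (n choose p) * x^n)) has_sum T) UNIV"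
  proof (rule has_sum_Sigma'[OF FT'[unfolded case_prod_unfold]])
    fix k :: nat
    have "(\<lambda>n. F n k) summable_on UNIV" using summable_on_SigmaD1[OF Fs'] by auto
    then have h: "((\<lambda>n. F n k) has_sum infsum (\<lambda>n. F n k) UNIV) UNIV" by (rule has_sum_infsum)
    then have "infsum (\<lambda>n. F n k) UNIV = y^k / fact k * (\<Sum>n<k. of_nat (n choose p) * x^n)"
      using col[of k] has_sum_imp_sums sums_unique2 by blast
    then show "((\<lambda>n. F (snd (k, n)) (fst (k, n))) has_sum (y^k / fact k * (\<Sum>n<k. of_nat (n choose p) * x^n))) UNIV"
      using h by simp
  qed
  have "S = T" using S has_sum_imp_sums[OF colT] sums_unique2 by blast
  then show ?thesis using has_sum_imp_sums[OF rowT] by simp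
qed

theorem mainTheorem3:
  fixes p :: nat and y :: complex
  shows "(\<forall>x::complex. x \<noteq> 1 \<longrightarrow>
            (\<lambda>n. of_nat (n choose p) * R n y * x ^ n) sums
              (x ^ p * exp y / (1 - x) ^ (p + 1) *
                (1 - exp (- ((1 - x) * y)) *
                   (\<Sum>j\<le>p. (1 - x) ^ j * y ^ j / of_nat (fact j)))))
         \<and> (\<lambda>n. of_nat (n choose p) * R n y) sums
              (exp y * y ^ (p + 1) / of_nat (fact (p + 1)))"
proof (intro conjI allI impI)
  fix x :: complex assume x1: "x \<noteq> 1"
  define q where "q = 1 - x"
  have q0: "q \<noteq> 0" using x1 by (simp add: q_def)
  have ck: "y^k / fact k * (\<Sum>n<k. of_nat (n choose p) * x^n)
      = x^p / q^Suc p * (y^k / fact k - (\<Sum>j\<le>p. q^j * (y^k / fact k * (of_nat (k choose j) * x^(k-j)))))" for k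
  proof -
    have c: "(\<Sum>n<k. of_nat (n choose p) * x^n) = x^p * (1 - Bq x p k) / q^Suc p"
      using poly_id[of x p k] q0 unfolding q_def by (simp add: nonzero_eq_divide_eq mult.commute)
    have eB: "y^k/fact k * Bq x p k = (\<Sum>j\<le>p. q^j * (y^k / fact k * (of_nat (k choose j) * x^(k-j))))"
      unfolding Bq_def q_def by (simp add: sum_distrib_left mult_ac)
    show ?thesis unfolding c eB[symmetric] using q0 by (simp add: field_simps)
  qed
  have "(\<lambda>k. x^p / q^Suc p * (y^k / fact k - (\<Sum>j\<le>p. q^j * (y^k / fact k * (of_nat (k choose j) * x^(k-j))))))
      sums (x^p / q^Suc p * (exp y - (\<Sum>j\<le>p. q^j * (y^j / fact j * exp (x*y)))))"
    by (intro sums_mult sums_diff exp_sums_c sums_sum L)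
  moreover have "x^p / q^Suc p * (exp y - (\<Sum>j\<le>p. q^j * (y^j / fact j * exp (x*y))))
     = x ^ p * exp y / (1 - x) ^ (p + 1) *
                (1 - exp (- ((1 - x) * y)) *
                   (\<Sum>j\<le>p. (1 - x) ^ j * y ^ j / of_nat (fact j)))"
  proof -
    have e: "exp y * exp (- ((1 - x) * y)) = exp (x*y)"
      by (simp add: exp_add[symmetric] algebra_simps)
    have "x ^ p * exp y / (1 - x) ^ (p + 1) *
                (1 - exp (- ((1 - x) * y)) *
                   (\<Sum>j\<le>p. (1 - x) ^ j * y ^ j / of_nat (fact j)))
        = x^p / q^Suc p * (exp y - (exp y * exp (- ((1 - x) * y))) * (\<Sum>j\<le>p. q^j * (y^j / fact j)))"
      by (simp add: q_def algebra_simps)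
    also have "\<dots> = x^p / q^Suc p * (exp y - (\<Sum>j\<le>p. q^j * (y^j / fact j * exp (x*y))))"
      unfolding e by (simp add: sum_distrib_left sum_distrib_right mult_ac)
    finally show ?thesis by simp
  qed
  ultimately show "(\<lambda>n. of_nat (n choose p) * R n y * x ^ n) sums
              (x ^ p * exp y / (1 - x) ^ (p + 1) *
                (1 - exp (- ((1 - x) * y)) *
                   (\<Sum>j\<le>p. (1 - x) ^ j * y ^ j / of_nat (fact j))))"
    by (intro fubini) (simp only: ck)
next
  have "(\<lambda>k. y^k / fact k * (of_nat (k choose Suc p) * 1^(k - Suc p))) sums (y^Suc p / fact (Suc p) * exp (1*y))"
    by (rule L)
  moreover have "(\<Sum>n<k. of_nat (n choose p) * (1::complex)^n) = of_nat (k choose Suc p)" for k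
    using hockey[of p k] by (simp flip: of_nat_sum)
  ultimately have "(\<lambda>k. y^k / fact k * (\<Sum>n<k. of_nat (n choose p) * (1::complex)^n)) sums (exp y * y ^ (p + 1) / of_nat (fact (p + 1)))"
    by (simp add: mult_ac distrib_left)
  from fubini[OF this] show "(\<lambda>n. of_nat (n choose p) * R n y) sums (exp y * y ^ (p + 1) / of_nat (fact (p + 1)))"
    by simp
qed

end
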